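(* Let $\mathbb{K}$ be a field and $\mathscr{C}$ the category whose objects are associative $\mathbb{K}$-algebras and whose morphisms $X\to Y$ are $\mathbb{K}$-algebra homomorphisms $\varphi$ such that $\varphi(X)$ is an ideal of $Y$ (this category has pullbacks, computed as in $\mathbf{Set}$). Let $M=\mathbb{Z}_2=\{0,1\}$ under addition modulo $2$ and $X$ a unital nonzero $\mathbb{K}$-algebra. Let $\beta$ be the global action of $M$ on $X\times X$ with $\beta_1(x,y)=(y,x)$, let $\iota\colon X\to X\times X$, $\iota(x)=(x,0)$, and let $\alpha$ be the restriction of $\beta$ to $X$ via $\iota$ (so $\operatorname{dom}\alpha_1=\{0\}$). Then $(\beta,\iota)$ is a universal globalization of $\alpha$, but $\iota$ is not a reflection of $\alpha$ in $\mathrm{Act}_M(\mathscr{C})$; consequently $\alpha$ has no reflection in $\mathrm{Act}_M(\mathscr{C})$.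
   Context: A partial action datum of $M$ on an object $X$ of a category with pullbacks $\mathscr{C}$ assigns to each $m\in M$ an isomorphism class of spans $[\operatorname{dom}\alpha_m,\iota_m,\alpha_m]$ with $\iota_m\colon\operatorname{dom}\alpha_m\to X$ a monomorphism and $\alpha_m\colon\operatorname{dom}\alpha_m\to X$. A global action of $M$ on $Y$ is a family of morphisms $\beta_m\colon Y\to Y$ with $\beta_e=\mathrm{id}_Y$, $\beta_n\circ\beta_m=\beta_{nm}$. A datum morphism from $\alpha$ to a global action $\gamma$ on $Z$ is a morphism $f\colon X\to Z$ with $\gamma_m\circ f\circ\iota_m=f\circ\alpha_m$ for all $m$; between global actions, datum morphisms are the $g$ with $g\circ\beta_m=\gamma_m\circ g$. $\mathrm{Act}_M(\mathscr{C})$ is the category of global actions with these morphisms. Given a global action $\beta$ on $Y$ and a monomorphism $\iota\colon X\to Y$, the restriction of $\beta$ via $\iota$ is the datum $\alpha$ on $X$ such that for each $m$ the square $\beta_m\circ\iota\circ\iota_m=\iota\circ\alpha_m$ is a pullback. A globalization of $\alpha$ is a pair $(\beta,\iota)$ with $\beta$ global on $Y$ and $\iota\colon X\to Y$ a monomorphism such that $\alpha$ is the restriction of $\beta$ via $\iota$; it is universal if for every globalization $(\gamma,\kappa)$ of $\alpha$ there is a unique datum morphism $\kappa'\colon\beta\to\gamma$ with $\kappa'\circ\iota=\kappa$. A reflection of $\alpha$ in $\mathrm{Act}_M(\mathscr{C})$ is a datum morphism $r\colon\alpha\to\beta$ with $\beta$ global such that for every datum morphism $f\colon\alpha\to\gamma$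 with $\gamma$ global there is a unique datum morphism $f'\colon\beta\to\gamma$ with $f'\circ r=f$. *)

theory Defs
  imports Main
begin

record ('k, 'a) kalg =
  acar  :: "'a set"
  aadd  :: "'a \<Rightarrow> 'a \<Rightarrow> 'a"
  amul  :: "'a \<Rightarrow> 'a \<Rightarrow> 'a"
  azero :: "'a"
  aneg  :: "'a \<Rightarrow> 'a"
  asmul :: "'k \<Rightarrow> 'a \<Rightarrow> 'a"

definition kalg :: "('k::field, 'a) kalg \<Rightarrow> bool" where
  "kalg A \<longleftrightarrow>
     azero A \<in> acar A \<and>
     (\<forall>x\<in>acar A. \<forall>y\<in>acar A. aadd A x y \<in> acar A \<and> amul A x y \<in> acar A) \<and>
     (\<forall>x\<in>acar A. aneg A x \<in> acar A) \<and>
     (\<forall>c. \<forall>x\<in>acar A. asmul A c x \<in> acar A) \<and>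
     (\<forall>x\<in>acar A. \<forall>y\<in>acar A. \<forall>z\<in>acar A. aadd A (aadd A x y) z = aadd A x (aadd A y z)) \<and>
     (\<forall>x\<in>acar A. \<forall>y\<in>acar A. aadd A x y = aadd A y x) \<and>
     (\<forall>x\<in>acar A. aadd A (azero A) x = x) \<and>
     (\<forall>x\<in>acar A. aadd A (aneg A x) x = azero A) \<and>
     (\<forall>x\<in>acar A. \<forall>y\<in>acar A. \<forall>z\<in>acar A. amul A (amul A x y) z = amul A x (amul A y z)) \<and>
     (\<forall>x\<in>acar A. \<forall>y\<in>acar A. \<forall>z\<in>acar A.
        amul A x (aadd A y z) = aadd A (amul A x y) (amul A x z) \<and>
        amul A (aadd A x y) z = aadd A (amul A x z) (amul A y z)) \<and>
     (\<forall>c. \<forall>x\<in>acar A. \<forall>y\<in>acar A. asmul A c (aadd A x y) = aadd A (asmul A c x) (asmul A c y)) \<and>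
     (\<forall>c d. \<forall>x\<in>acar A. asmul A (c + d) x = aadd A (asmul A c x) (asmul A d x)) \<and>
     (\<forall>c d. \<forall>x\<in>acar A. asmul A (c * d) x = asmul A c (asmul A d x)) \<and>
     (\<forall>x\<in>acar A. asmul A 1 x = x) \<and>
     (\<forall>c. \<forall>x\<in>acar A. \<forall>y\<in>acar A.
        asmul A c (amul A x y) = amul A (asmul A c x) y \<and>
        asmul A c (amul A x y) = amul A x (asmul A c y))"

definition unital :: "('k, 'a) kalg \<Rightarrow> bool" where
  "unital A \<longleftrightarrow> (\<exists>u\<in>acar A. \<forall>x\<in>acar A. amul A u x = x \<and> amul A x u = x)"

definition nonzero :: "('k, 'a) kalg \<Rightarrow> bool" where
  "nonzero A \<longleftrightarrow> acar A \<noteq> {azero A}"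

definition alg_hom :: "('k, 'a) kalg \<Rightarrow> ('k, 'b) kalg \<Rightarrow> ('a \<Rightarrow> 'b) \<Rightarrow> bool" where
  "alg_hom A B f \<longleftrightarrow>
     (\<forall>x\<in>acar A. f x \<in> acar B) \<and>
     (\<forall>x\<in>acar A. \<forall>y\<in>acar A. f (aadd A x y) = aadd B (f x) (f y)) \<and>
     (\<forall>x\<in>acar A. \<forall>y\<in>acar A. f (amul A x y) = amul B (f x) (f y)) \<and>
     (\<forall>c. \<forall>x\<in>acar A. f (asmul A c x) = asmul B c (f x))"

definition alg_ideal :: "('k, 'b) kalg \<Rightarrow> 'b set \<Rightarrow> bool" where
  "alg_ideal B I \<longleftrightarrow>
     I \<subseteq> acar B \<and> azero B \<in> I \<and>
     (\<forall>x\<in>I. \<forall>y\<in>I. aadd B x y \<in> I) \<and> (\<forall>x\<in>I. aneg B x \<in> I) \<and>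
     (\<forall>c. \<forall>x\<in>I. asmul B c x \<in> I) \<and>
     (\<forall>b\<in>acar B. \<forall>x\<in>I. amul B b x \<in> I \<and> amul B x b \<in> I)"

definition morC :: "('k::field, 'a) kalg \<Rightarrow> ('k, 'b) kalg \<Rightarrow> ('a \<Rightarrow> 'b) \<Rightarrow> bool" where
  "morC A B f \<longleftrightarrow> kalg A \<and> kalg B \<and> alg_hom A B f \<and> alg_ideal B (f ` acar A)"

text \<open>Monomorphisms of C (these are exactly the injective morphisms).\<close>
definition monoC :: "('k::field, 'a) kalg \<Rightarrow> ('k, 'b) kalg \<Rightarrow> ('a \<Rightarrow> 'b) \<Rightarrow> bool" where
  "monoC A B f \<longleftrightarrow> morC A B f \<and> inj_on f (acar A)"

text \<open>Pullback squares in C (pullbacks in C are computed as in Set):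
  the square  f \<circ> p = g \<circ> q  with vertex D is a pullback iff the comparison
  map from D to the set-theoretic pullback is bijective.\<close>
definition pullback_sq ::
  "('k::field, 'd) kalg \<Rightarrow> ('k, 'a) kalg \<Rightarrow> ('k, 'b) kalg \<Rightarrow> ('k, 'c) kalg \<Rightarrow>
   ('d \<Rightarrow> 'a) \<Rightarrow> ('d \<Rightarrow> 'b) \<Rightarrow> ('a \<Rightarrow> 'c) \<Rightarrow> ('b \<Rightarrow> 'c) \<Rightarrow> bool" where
  "pullback_sq D A B C p q f g \<longleftrightarrow>
     morC D A p \<and> morC D B q \<and> morC A C f \<and> morC B C g \<and>
     (\<forall>d\<in>acar D. f (p d) = g (q d)) \<and>
     bij_betw (\<lambda>d. (p d, q d)) (acar D) {(a, b). a \<in> acar A \<and> b \<in> acar B \<and> f a = g b}"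

definition prod_alg :: "('k, 'a) kalg \<Rightarrow> ('k, 'a \<times> 'a) kalg" where
  "prod_alg A =
     \<lparr> acar = acar A \<times> acar A,
       aadd = (\<lambda>(a, b) (c, d). (aadd A a c, aadd A b d)),
       amul = (\<lambda>(a, b) (c, d). (amul A a c, amul A b d)),
       azero = (azero A, azero A),
       aneg = (\<lambda>(a, b). (aneg A a, aneg A b)),
       asmul = (\<lambda>k (a, b). (asmul A k a, asmul A k b)) \<rparr>"

text \<open>A partial action datum: for each m a representative span
  (dom alpha_m, iota_m, alpha_m).\<close>
type_synonym ('k, 'd, 'x, 'm) datum = "'m \<Rightarrow> ('k, 'd) kalg \<times> ('d \<Rightarrow> 'x) \<times> ('d \<Rightarrow> 'x)"

definition ddom :: "('k, 'd, 'x, 'm) datum \<Rightarrow> 'm \<Rightarrow> ('k, 'd) kalg" where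
  "ddom \<alpha> m = fst (\<alpha> m)"
definition dinc :: "('k, 'd, 'x, 'm) datum \<Rightarrow> 'm \<Rightarrow> 'd \<Rightarrow> 'x" where
  "dinc \<alpha> m = fst (snd (\<alpha> m))"
definition dmap :: "('k, 'd, 'x, 'm) datum \<Rightarrow> 'm \<Rightarrow> 'd \<Rightarrow> 'x" where
  "dmap \<alpha> m = snd (snd (\<alpha> m))"

definition partial_datum :: "('k::field, 'd, 'x, 'm) datum \<Rightarrow> ('k, 'x) kalg \<Rightarrow> bool" where
  "partial_datum \<alpha> X \<longleftrightarrow>
     (\<forall>m. monoC (ddom \<alpha> m) X (dinc \<alpha> m) \<and> morC (ddom \<alpha> m) X (dmap \<alpha> m))"

definition global_action ::
  "('m \<Rightarrow> 'm \<Rightarrow> 'm) \<Rightarrow> 'm \<Rightarrow> ('k::field, 'y) kalg \<Rightarrow> ('m \<Rightarrow> 'y \<Rightarrow> 'y) \<Rightarrow> bool" where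
  "global_action Mop Me Y \<beta> \<longleftrightarrow>
     (\<forall>m. morC Y Y (\<beta> m)) \<and>
     (\<forall>y\<in>acar Y. \<beta> Me y = y) \<and>
     (\<forall>m n. \<forall>y\<in>acar Y. \<beta> n (\<beta> m y) = \<beta> (Mop n m) y)"

definition datum_mor ::
  "('k::field, 'd, 'x, 'm) datum \<Rightarrow> ('k, 'x) kalg \<Rightarrow> ('k, 'z) kalg \<Rightarrow> ('m \<Rightarrow> 'z \<Rightarrow> 'z)
   \<Rightarrow> ('x \<Rightarrow> 'z) \<Rightarrow> bool" where
  "datum_mor \<alpha> X Z \<gamma> f \<longleftrightarrow>
     morC X Z f \<and>
     (\<forall>m. \<forall>d\<in>acar (ddom \<alpha> m). \<gamma> m (f (dinc \<alpha> m d)) = f (dmap \<alpha> m d))"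

definition global_mor ::
  "('k::field, 'y) kalg \<Rightarrow> ('m \<Rightarrow> 'y \<Rightarrow> 'y) \<Rightarrow> ('k, 'z) kalg \<Rightarrow> ('m \<Rightarrow> 'z \<Rightarrow> 'z)
   \<Rightarrow> ('y \<Rightarrow> 'z) \<Rightarrow> bool" where
  "global_mor Y \<beta> Z \<gamma> g \<longleftrightarrow>
     morC Y Z g \<and> (\<forall>m. \<forall>y\<in>acar Y. g (\<beta> m y) = \<gamma> m (g y))"

definition is_restriction ::
  "('k::field, 'd, 'x, 'm) datum \<Rightarrow> ('k, 'x) kalg \<Rightarrow> ('k, 'y) kalg \<Rightarrow> ('m \<Rightarrow> 'y \<Rightarrow> 'y)
   \<Rightarrow> ('x \<Rightarrow> 'y) \<Rightarrow> bool" where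
  "is_restriction \<alpha> X Y \<beta> \<iota> \<longleftrightarrow>
     partial_datum \<alpha> X \<and> monoC X Y \<iota> \<and>
     (\<forall>m. pullback_sq (ddom \<alpha> m) X X Y (dinc \<alpha> m) (dmap \<alpha> m) (\<beta> m \<circ> \<iota>) \<iota>)"

definition globalization ::
  "('m \<Rightarrow> 'm \<Rightarrow> 'm) \<Rightarrow> 'm \<Rightarrow> ('k::field, 'd, 'x, 'm) datum \<Rightarrow> ('k, 'x) kalg \<Rightarrow>
   ('k, 'y) kalg \<Rightarrow> ('m \<Rightarrow> 'y \<Rightarrow> 'y) \<Rightarrow> ('x \<Rightarrow> 'y) \<Rightarrow> bool" where
  "globalization Mop Me \<alpha> X Y \<beta> \<iota> \<longleftrightarrow>
     global_action Mop Me Y \<beta> \<and> monoC X Y \<iota> \<and> is_restriction \<alpha> X Y \<beta> \<iota>"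

text \<open>Universal globalization; the competing globalizations range over objects whose
  carriers live in the type 'z (in the theorem 'z is an arbitrary type variable).\<close>
definition universal_globalization ::
  "'z itself \<Rightarrow> ('m \<Rightarrow> 'm \<Rightarrow> 'm) \<Rightarrow> 'm \<Rightarrow> ('k::field, 'd, 'x, 'm) datum \<Rightarrow> ('k, 'x) kalg \<Rightarrow>
   ('k, 'y) kalg \<Rightarrow> ('m \<Rightarrow> 'y \<Rightarrow> 'y) \<Rightarrow> ('x \<Rightarrow> 'y) \<Rightarrow> bool" where
  "universal_globalization (T :: 'z itself) Mop Me \<alpha> X Y \<beta> \<iota> \<longleftrightarrow>
     globalization Mop Me \<alpha> X Y \<beta> \<iota> \<and>
     (\<forall>(Z :: ('k, 'z) kalg) \<gamma> \<kappa>. globalization Mop Me \<alpha> X Z \<gamma> \<kappa> \<longrightarrow>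
        (\<exists>\<kappa>'. global_mor Y \<beta> Z \<gamma> \<kappa>' \<and> (\<forall>x\<in>acar X. \<kappa>' (\<iota> x) = \<kappa> x) \<and>
           (\<forall>\<kappa>''. global_mor Y \<beta> Z \<gamma> \<kappa>'' \<and> (\<forall>x\<in>acar X. \<kappa>'' (\<iota> x) = \<kappa> x) \<longrightarrow>
                 (\<forall>y\<in>acar Y. \<kappa>'' y = \<kappa>' y))))"

text \<open>Reflection of alpha in Act_M(C); the test global actions range over objects whose
  carriers live in the type 'c.\<close>
definition is_reflection ::
  "'c itself \<Rightarrow> ('m \<Rightarrow> 'm \<Rightarrow> 'm) \<Rightarrow> 'm \<Rightarrow> ('k::field, 'd, 'x, 'm) datum \<Rightarrow> ('k, 'x) kalg \<Rightarrow>
   ('k, 'y) kalg \<Rightarrow> ('m \<Rightarrow> 'y \<Rightarrow> 'y) \<Rightarrow> ('x \<Rightarrow> 'y) \<Rightarrow> bool" where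
  "is_reflection (T :: 'c itself) Mop Me \<alpha> X Y \<beta> r \<longleftrightarrow>
     global_action Mop Me Y \<beta> \<and> datum_mor \<alpha> X Y \<beta> r \<and>
     (\<forall>(Z :: ('k, 'c) kalg) \<gamma> f. global_action Mop Me Z \<gamma> \<and> datum_mor \<alpha> X Z \<gamma> f \<longrightarrow>
        (\<exists>f'. global_mor Y \<beta> Z \<gamma> f' \<and> (\<forall>x\<in>acar X. f' (r x) = f x) \<and>
           (\<forall>f''. global_mor Y \<beta> Z \<gamma> f'' \<and> (\<forall>x\<in>acar X. f'' (r x) = f x) \<longrightarrow>
                 (\<forall>y\<in>acar Y. f'' y = f' y))))"

datatype z2 = Z0 | Z1

fun z2_add :: "z2 \<Rightarrow> z2 \<Rightarrow> z2" where
  "z2_add Z0 n = n"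
| "z2_add Z1 Z0 = Z1"
| "z2_add Z1 Z1 = Z0"

fun swap_act :: "z2 \<Rightarrow> 'a \<times> 'a \<Rightarrow> 'a \<times> 'a" where
  "swap_act Z0 p = p"
| "swap_act Z1 (a, b) = (b, a)"

end

theory Submission
  imports Defs
begin


context fixes A :: "('k::field, 'a) kalg" assumes K: "kalg A" begin
lemma kz: "azero A \<in> acar A" using K unfolding kalg_def by (elim conjE) (metis (no_types, lifting))
lemma kadd: "x \<in> acar A \<Longrightarrow> y \<in> acar A \<Longrightarrow> aadd A x y \<in> acar A" using K unfolding kalg_def by (elim conjE) (metis (no_types, lifting))
lemma kmul: "x \<in> acar A \<Longrightarrow> y \<in> acar A \<Longrightarrow> amul A x y \<in> acar A" using K unfolding kalg_def by (elim conjE) (metis (no_types, lifting))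
lemma kneg: "x \<in> acar A \<Longrightarrow> aneg A x \<in> acar A" using K unfolding kalg_def by (elim conjE) (metis (no_types, lifting))
lemma ksmul: "x \<in> acar A \<Longrightarrow> asmul A c x \<in> acar A" using K unfolding kalg_def by (elim conjE) (metis (no_types, lifting))
lemma kassoc: "x \<in> acar A \<Longrightarrow> y \<in> acar A \<Longrightarrow> z \<in> acar A \<Longrightarrow> aadd A (aadd A x y) z = aadd A x (aadd A y z)" using K unfolding kalg_def by (elim conjE) (metis (no_types, lifting))
lemma kcomm: "x \<in> acar A \<Longrightarrow> y \<in> acar A \<Longrightarrow> aadd A x y = aadd A y x" using K unfolding kalg_def by (elim conjE) (metis (no_types, lifting))
lemma klz: "x \<in> acar A \<Longrightarrow> aadd A (azero A) x = x" using K unfolding kalg_def by (elim conjE) (metis (no_types, lifting))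
lemma kinv: "x \<in> acar A \<Longrightarrow> aadd A (aneg A x) x = azero A" using K unfolding kalg_def by (elim conjE) (metis (no_types, lifting))
lemma kldist: "x \<in> acar A \<Longrightarrow> y \<in> acar A \<Longrightarrow> z \<in> acar A \<Longrightarrow> amul A x (aadd A y z) = aadd A (amul A x y) (amul A x z)" using K unfolding kalg_def by (elim conjE) (metis (no_types, lifting))
lemma krdist: "x \<in> acar A \<Longrightarrow> y \<in> acar A \<Longrightarrow> z \<in> acar A \<Longrightarrow> amul A (aadd A x y) z = aadd A (amul A x z) (amul A y z)" using K unfolding kalg_def by (elim conjE) (metis (no_types, lifting))
lemma ksdist: "x \<in> acar A \<Longrightarrow> y \<in> acar A \<Longrightarrow> asmul A c (aadd A x y) = aadd A (asmul A c x) (asmul A c y)" using K unfolding kalg_def by (elim conjE) (metis (no_types, lifting))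
lemma kmassoc: "x \<in> acar A \<Longrightarrow> y \<in> acar A \<Longrightarrow> z \<in> acar A \<Longrightarrow> amul A (amul A x y) z = amul A x (amul A y z)" using K unfolding kalg_def by (elim conjE) (metis (no_types, lifting))
lemma ksadd: "x \<in> acar A \<Longrightarrow> asmul A (c + d) x = aadd A (asmul A c x) (asmul A d x)" using K unfolding kalg_def by (elim conjE) (metis (no_types, lifting))
lemma ksmm: "x \<in> acar A \<Longrightarrow> asmul A (c * d) x = asmul A c (asmul A d x)" using K unfolding kalg_def by (elim conjE) (metis (no_types, lifting))
lemma ks1: "x \<in> acar A \<Longrightarrow> asmul A 1 x = x" using K unfolding kalg_def by (elim conjE) (metis (no_types, lifting))
lemma ksc1: "x \<in> acar A \<Longrightarrow> y \<in> acar A \<Longrightarrow> asmul A c (amul A x y) = amul A (asmul A c x) y" using K unfolding kalg_def by (elim conjE) (metis (no_types, lifting))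
lemma ksc2: "x \<in> acar A \<Longrightarrow> y \<in> acar A \<Longrightarrow> asmul A c (amul A x y) = amul A x (asmul A c y)" using K unfolding kalg_def by (elim conjE) (metis (no_types, lifting))
lemma krz: "x \<in> acar A \<Longrightarrow> aadd A x (azero A) = x" using kcomm[of x "azero A"] klz[of x] kz by simp
lemma kidem: assumes "x \<in> acar A" "aadd A x x = x" shows "x = azero A"
proof -
  have "x = aadd A (aadd A (aneg A x) x) x" using klz kinv assms by simp
  also have "\<dots> = aadd A (aneg A x) (aadd A x x)" using kassoc kneg assms by simp
  also have "\<dots> = azero A" using assms kinv by simp
  finally show ?thesis .
qed
lemma kmz: "x \<in> acar A \<Longrightarrow> amul A x (azero A) = azero A"
  by (rule kidem) (auto simp: kmul kz kldist[symmetric] klz)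
lemma kzm: "x \<in> acar A \<Longrightarrow> amul A (azero A) x = azero A"
  by (rule kidem) (auto simp: kmul kz krdist[symmetric] klz)
lemma ksz: "asmul A c (azero A) = azero A"
  by (rule kidem) (auto simp: ksmul kz ksdist[symmetric] klz)
lemma kinv_unique: assumes "x \<in> acar A" "y \<in> acar A" "aadd A y x = azero A" shows "y = aneg A x"
proof -
  have "y = aadd A (aadd A (aneg A x) x) y" using klz kinv assms by simp
  also have "\<dots> = aadd A (aneg A x) (aadd A y x)" using kassoc[of "aneg A x" x y] kcomm[of x y] kneg assms by simp
  also have "\<dots> = aneg A x" using assms krz kneg by simp
  finally show ?thesis .
qed
lemma knz: "aneg A (azero A) = azero A" using kinv_unique[of "azero A" "azero A"] kz klz by simp
end

lemma hom_zero: assumes "kalg A" "kalg B" "alg_hom A B f" shows "f (azero A) = azero B"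
proof -
  have "f (azero A) = f (aadd A (azero A) (azero A))" using klz kz assms by metis
  also have "\<dots> = aadd B (f (azero A)) (f (azero A))" using assms kz unfolding alg_hom_def by blast
  finally show ?thesis using kidem[OF assms(2)] assms kz unfolding alg_hom_def by metis
qed

lemma hom_neg: assumes "kalg A" "kalg B" "alg_hom A B f" "x \<in> acar A" shows "f (aneg A x) = aneg B (f x)"
proof -
  have "aadd B (f (aneg A x)) (f x) = f (aadd A (aneg A x) x)" using assms kneg unfolding alg_hom_def by metis
  also have "\<dots> = azero B" using hom_zero assms kinv by metis
  finally show ?thesis using kinv_unique[OF assms(2)] assms kneg unfolding alg_hom_def by metis
qed

lemma hom_image_ideal:
  assumes "kalg A" "kalg B" "alg_hom A B f"
    and L: "\<And>b x. b \<in> acar B \<Longrightarrow> x \<in> acar A \<Longrightarrow> amul B b (f x) \<in> f ` acar A"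
    and R: "\<And>b x. b \<in> acar B \<Longrightarrow> x \<in> acar A \<Longrightarrow> amul B (f x) b \<in> f ` acar A"
  shows "alg_ideal B (f ` acar A)"
  unfolding alg_ideal_def
proof (intro conjI ballI allI)
  show "f ` acar A \<subseteq> acar B" using assms(3) unfolding alg_hom_def by blast
  show "azero B \<in> f ` acar A" using hom_zero[OF assms(1-3)] kz[OF assms(1)] by force
next
  fix x y assume "x \<in> f ` acar A" "y \<in> f ` acar A"
  then obtain a b where "a \<in> acar A" "b \<in> acar A" "x = f a" "y = f b" by blast
  then show "aadd B x y \<in> f ` acar A" using assms(3) kadd[OF assms(1)] unfolding alg_hom_def by (metis imageI)
next
  fix x assume "x \<in> f ` acar A"
  then obtain a where a: "a \<in> acar A" "x = f a" by blast
  have "aneg B x = f (aneg A a)" using hom_neg[OF assms(1-3) a(1)] a by simp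
  then show "aneg B x \<in> f ` acar A" using kneg[OF assms(1) a(1)] by blast
next
  fix x c assume "x \<in> f ` acar A"
  then obtain a where a: "a \<in> acar A" "x = f a" by blast
  then show "asmul B c x \<in> f ` acar A" using assms(3) ksmul[OF assms(1)] unfolding alg_hom_def by (metis imageI)
next
  fix b x assume "b \<in> acar B" "x \<in> f ` acar A"
  then show "amul B b x \<in> f ` acar A" using L by blast
next
  fix b x assume "b \<in> acar B" "x \<in> f ` acar A"
  then show "amul B x b \<in> f ` acar A" using R by blast
qed

lemma prod_kalg: assumes K: "kalg X" shows "kalg (prod_alg X)"
  unfolding kalg_def prod_alg_def
  apply (auto simp: kz[OF K] kadd[OF K] kmul[OF K] kneg[OF K] ksmul[OF K] kassoc[OF K] klz[OF K] kinv[OF K]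
     kldist[OF K] krdist[OF K] ksdist[OF K] kmassoc[OF K] ksadd[OF K] ksmm[OF K] ks1[OF K]
     ksc1[OF K] ksc2[OF K])
  by (metis kcomm[OF K] ksc1[OF K] ksc2[OF K])+



lemma prod_ideal_all: assumes K: "kalg X" shows "alg_ideal (prod_alg X) (acar (prod_alg X))"
  using prod_kalg[OF K] unfolding alg_ideal_def kalg_def by (elim conjE) (intro conjI; blast)

lemma id_morC: assumes K: "kalg X" shows "morC (prod_alg X) (prod_alg X) id"
  unfolding morC_def alg_hom_def using prod_kalg[OF K] prod_ideal_all[OF K] by simp

lemma swap_morC: assumes K: "kalg X" shows "morC (prod_alg X) (prod_alg X) (swap_act m)"
proof (cases m)
  case Z0
  have "swap_act Z0 = (id :: 'b \<times> 'b \<Rightarrow> _)" by (rule ext) simp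
  then show ?thesis using id_morC[OF K] Z0 by simp
next
  case Z1
  have im: "swap_act Z1 ` acar (prod_alg X) = acar (prod_alg X)"
    by (auto simp: prod_alg_def image_iff)
  have "alg_hom (prod_alg X) (prod_alg X) (swap_act Z1)"
    unfolding alg_hom_def by (auto simp: prod_alg_def)
  then show ?thesis using Z1 im prod_kalg[OF K] prod_ideal_all[OF K] unfolding morC_def by simp
qed

lemma gsw: assumes K: "kalg X" shows "global_action z2_add Z0 (prod_alg X) swap_act"
  unfolding global_action_def
proof (intro conjI allI ballI)
  fix m show "morC (prod_alg X) (prod_alg X) (swap_act m)" using swap_morC[OF K] .
next
  fix y show "swap_act Z0 y = y" by simp
next
  fix m n y show "swap_act n (swap_act m y) = swap_act (z2_add n m) y"
    by (cases m; cases n; cases y; simp)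
qed

lemma gid: assumes K: "kalg X" shows "global_action z2_add Z0 (prod_alg X) (\<lambda>m. id)"
  unfolding global_action_def using id_morC[OF K] by simp

lemma iota_morC: assumes K: "kalg X" shows "monoC X (prod_alg X) (\<lambda>x. (x, azero X))"
proof -
  have h: "alg_hom X (prod_alg X) (\<lambda>x. (x, azero X))"
    unfolding alg_hom_def prod_alg_def
    by (auto simp: kadd[OF K] kz[OF K] klz[OF K] kzm[OF K] ksz[OF K])
  have "alg_ideal (prod_alg X) ((\<lambda>x. (x, azero X)) ` acar X)"
    unfolding alg_ideal_def prod_alg_def
    by (auto simp: kadd[OF K] kz[OF K] klz[OF K] kzm[OF K] kmz[OF K] ksz[OF K] knz[OF K] kneg[OF K] ksmul[OF K] kmul[OF K])
  then show ?thesis using h K prod_kalg[OF K] unfolding monoC_def morC_def inj_on_def by simp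
qed

lemma restr_facts:
  assumes R: "is_restriction \<alpha> X (prod_alg X) swap_act (\<lambda>x. (x, azero X))"
  shows "\<And>d. d \<in> acar (ddom \<alpha> Z0) \<Longrightarrow> dinc \<alpha> Z0 d = dmap \<alpha> Z0 d"
    and "\<And>d. d \<in> acar (ddom \<alpha> Z1) \<Longrightarrow> dinc \<alpha> Z1 d = azero X \<and> dmap \<alpha> Z1 d = azero X"
proof -
  have C: "\<forall>m. \<forall>d\<in>acar (ddom \<alpha> m). swap_act m (dinc \<alpha> m d, azero X) = (dmap \<alpha> m d, azero X)"
    using R unfolding is_restriction_def pullback_sq_def by (simp add: comp_def)
  show "\<And>d. d \<in> acar (ddom \<alpha> Z0) \<Longrightarrow> dinc \<alpha> Z0 d = dmap \<alpha> Z0 d" using C by force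
  show "\<And>d. d \<in> acar (ddom \<alpha> Z1) \<Longrightarrow> dinc \<alpha> Z1 d = azero X \<and> dmap \<alpha> Z1 d = azero X" using C by force
qed

lemma dm_sw: assumes K: "kalg X" and R: "is_restriction \<alpha> X (prod_alg X) swap_act (\<lambda>x. (x, azero X))"
  shows "datum_mor \<alpha> X (prod_alg X) swap_act (\<lambda>x. (x, azero X))"
  using R iota_morC[OF K] unfolding is_restriction_def pullback_sq_def datum_mor_def monoC_def by auto

lemma dm_id: assumes K: "kalg X" and R: "is_restriction \<alpha> X (prod_alg X) swap_act (\<lambda>x. (x, azero X))"
  shows "datum_mor \<alpha> X (prod_alg X) (\<lambda>m. id) (\<lambda>x. (x, azero X))"
  unfolding datum_mor_def
proof (intro conjI allI ballI)
  show "morC X (prod_alg X) (\<lambda>x. (x, azero X))" using iota_morC[OF K] unfolding monoC_def by simp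
  fix m d assume "d \<in> acar (ddom \<alpha> m)"
  then show "id (dinc \<alpha> m d, azero X) = (dmap \<alpha> m d, azero X)"
    using restr_facts[OF R] by (cases m) auto
qed



lemma no_reflection:
  fixes X :: "('k::field, 'x) kalg" and Y :: "('k, 'y) kalg"
  assumes K: "kalg X" and U: "unital X" and N: "nonzero X"
    and R: "is_restriction \<alpha> X (prod_alg X) swap_act (\<lambda>x. (x, azero X))"
  shows "\<not> is_reflection TYPE('x \<times> 'x) z2_add Z0 \<alpha> X Y \<beta>' r"
proof
  assume refl: "is_reflection TYPE('x \<times> 'x) z2_add Z0 \<alpha> X Y \<beta>' r"
  let ?i = "\<lambda>x. (x, azero X)"
  have GA: "global_action z2_add Z0 Y \<beta>'" and DM: "datum_mor \<alpha> X Y \<beta>' r"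
    using refl unfolding is_reflection_def by auto
  have U': "\<forall>(Z :: ('k, 'x \<times> 'x) kalg) \<gamma> f. global_action z2_add Z0 Z \<gamma> \<and> datum_mor \<alpha> X Z \<gamma> f \<longrightarrow>
        (\<exists>f'. global_mor Y \<beta>' Z \<gamma> f' \<and> (\<forall>x\<in>acar X. f' (r x) = f x))"
    using refl unfolding is_reflection_def by blast
  obtain g where g: "global_mor Y \<beta>' (prod_alg X) swap_act g" "\<forall>x\<in>acar X. g (r x) = ?i x"
    using U' gsw[OF K] dm_sw[OF K R] by blast
  obtain h where h: "global_mor Y \<beta>' (prod_alg X) (\<lambda>m. id) h" "\<forall>x\<in>acar X. h (r x) = ?i x"
    using U'[rule_format, OF conjI[OF gid[OF K] dm_id[OF K R]]] by blast
  have rm: "morC X Y r" using DM unfolding datum_mor_def by simp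
  have KY: "kalg Y" using rm unfolding morC_def by simp
  have rin: "\<And>x. x \<in> acar X \<Longrightarrow> r x \<in> acar Y" using rm unfolding morC_def alg_hom_def by simp
  have rid: "alg_ideal Y (r ` acar X)" using rm unfolding morC_def by simp
  have bm: "morC Y Y (\<beta>' Z1)" using GA unfolding global_action_def by simp
  have bin: "\<And>y. y \<in> acar Y \<Longrightarrow> \<beta>' Z1 y \<in> acar Y" using bm unfolding morC_def alg_hom_def by simp
  have bmul: "\<And>y z. y \<in> acar Y \<Longrightarrow> z \<in> acar Y \<Longrightarrow> \<beta>' Z1 (amul Y y z) = amul Y (\<beta>' Z1 y) (\<beta>' Z1 z)"
    using bm unfolding morC_def alg_hom_def by simp
  have binv: "\<And>y. y \<in> acar Y \<Longrightarrow> \<beta>' Z1 (\<beta>' Z1 y) = y"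
    using GA unfolding global_action_def by (metis z2_add.simps(3))
  obtain u where u: "u \<in> acar X" "\<And>x. x \<in> acar X \<Longrightarrow> amul X x u = x"
    using U unfolding unital_def by blast
  obtain x where x: "x \<in> acar X" "x \<noteq> azero X"
    using N kz[OF K] unfolding nonzero_def by blast
  define w where "w = amul Y (r x) (\<beta>' Z1 (r u))"
  have w1: "w \<in> r ` acar X" using rid rin bin x u unfolding alg_ideal_def w_def by blast
  then obtain a where a: "a \<in> acar X" "w = r a" by blast
  have v1: "amul Y (\<beta>' Z1 (r x)) (r u) \<in> r ` acar X" using rid rin bin x u unfolding alg_ideal_def by blast
  then obtain b where b: "b \<in> acar X" "amul Y (\<beta>' Z1 (r x)) (r u) = r b" by blast
  have "\<beta>' Z1 (r b) = amul Y (\<beta>' Z1 (\<beta>' Z1 (r x))) (\<beta>' Z1 (r u))"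
    using b(2)[symmetric] bmul rin bin x u by simp
  also have "\<dots> = w" unfolding w_def using binv rin x by simp
  finally have wb: "w = \<beta>' Z1 (r b)" by simp
  have "g w = (a, azero X)" using a g(2) by simp
  moreover have "g w = swap_act Z1 (g (r b))" using wb g(1) rin b unfolding global_mor_def by simp
  hence "g w = (azero X, b)" using g(2) b by simp
  ultimately have a0: "a = azero X" by simp
  have hw0: "h w = (azero X, azero X)" using a a0 h(2) kz[OF K] by simp
  have hh: "alg_hom Y (prod_alg X) h" using h(1) unfolding global_mor_def morC_def by simp
  have "h w = amul (prod_alg X) (h (r x)) (h (\<beta>' Z1 (r u)))"
    unfolding w_def using hh rin bin x u unfolding alg_hom_def by simp
  also have "h (\<beta>' Z1 (r u)) = h (r u)" using h(1) rin u unfolding global_mor_def by simp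
  finally have "h w = amul (prod_alg X) (x, azero X) (u, azero X)" using h(2) x u by simp
  hence "fst (h w) = x" using u x by (simp add: prod_alg_def)
  then show False using x hw0 by simp
qed



lemma kswap4: assumes K: "kalg A" and "p \<in> acar A" "q \<in> acar A" "r \<in> acar A" "s \<in> acar A"
  shows "aadd A (aadd A p q) (aadd A r s) = aadd A (aadd A p r) (aadd A q s)"
proof -
  have "aadd A (aadd A p q) (aadd A r s) = aadd A p (aadd A q (aadd A r s))" using assms kassoc kadd by metis
  also have "aadd A q (aadd A r s) = aadd A r (aadd A q s)"
    using assms kassoc[OF K, of q r s] kassoc[OF K, of r q s] kcomm[OF K, of q r] by simp
  also have "aadd A p (aadd A r (aadd A q s)) = aadd A (aadd A p r) (aadd A q s)" using assms kassoc kadd by metis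
  finally show ?thesis .
qed

lemma universal_ext:
  fixes X :: "('k::field, 'x) kalg" and Z :: "('k, 'z) kalg"
  assumes K: "kalg X"
    and R: "is_restriction \<alpha> X (prod_alg X) swap_act (\<lambda>x. (x, azero X))"
    and G: "globalization z2_add Z0 \<alpha> X Z \<gamma> \<kappa>"
  shows "\<exists>\<kappa>'. global_mor (prod_alg X) swap_act Z \<gamma> \<kappa>' \<and> (\<forall>x\<in>acar X. \<kappa>' (x, azero X) = \<kappa> x) \<and>
           (\<forall>\<kappa>''. global_mor (prod_alg X) swap_act Z \<gamma> \<kappa>'' \<and> (\<forall>x\<in>acar X. \<kappa>'' (x, azero X) = \<kappa> x) \<longrightarrow>
                 (\<forall>y\<in>acar (prod_alg X). \<kappa>'' y = \<kappa>' y))"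
proof -
  let ?P = "prod_alg X"
  have GA: "global_action z2_add Z0 Z \<gamma>" and km: "morC X Z \<kappa>" and RZ: "is_restriction \<alpha> X Z \<gamma> \<kappa>"
    using G unfolding globalization_def monoC_def by auto
  have KZ: "kalg Z" using km unfolding morC_def by simp
  have KP: "kalg ?P" using prod_kalg[OF K] .
  have kh: "alg_hom X Z \<kappa>" using km unfolding morC_def by simp
  have kid: "alg_ideal Z (\<kappa> ` acar X)" using km unfolding morC_def by simp
  have kin: "\<And>x. x \<in> acar X \<Longrightarrow> \<kappa> x \<in> acar Z" using kh unfolding alg_hom_def by simp
  have kadd': "\<And>x y. x \<in> acar X \<Longrightarrow> y \<in> acar X \<Longrightarrow> \<kappa> (aadd X x y) = aadd Z (\<kappa> x) (\<kappa> y)"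
    using kh unfolding alg_hom_def by simp
  have kmul': "\<And>x y. x \<in> acar X \<Longrightarrow> y \<in> acar X \<Longrightarrow> \<kappa> (amul X x y) = amul Z (\<kappa> x) (\<kappa> y)"
    using kh unfolding alg_hom_def by simp
  have ksm': "\<And>c x. x \<in> acar X \<Longrightarrow> \<kappa> (asmul X c x) = asmul Z c (\<kappa> x)"
    using kh unfolding alg_hom_def by simp
  have k0: "\<kappa> (azero X) = azero Z" using hom_zero[OF K KZ kh] .
  have gm: "morC Z Z (\<gamma> Z1)" using GA unfolding global_action_def by simp
  have gh: "alg_hom Z Z (\<gamma> Z1)" using gm unfolding morC_def by simp
  have gin: "\<And>x. x \<in> acar Z \<Longrightarrow> \<gamma> Z1 x \<in> acar Z" using gh unfolding alg_hom_def by simp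
  have gadd: "\<And>x y. x \<in> acar Z \<Longrightarrow> y \<in> acar Z \<Longrightarrow> \<gamma> Z1 (aadd Z x y) = aadd Z (\<gamma> Z1 x) (\<gamma> Z1 y)"
    using gh unfolding alg_hom_def by simp
  have gmul: "\<And>x y. x \<in> acar Z \<Longrightarrow> y \<in> acar Z \<Longrightarrow> \<gamma> Z1 (amul Z x y) = amul Z (\<gamma> Z1 x) (\<gamma> Z1 y)"
    using gh unfolding alg_hom_def by simp
  have gsm: "\<And>c x. x \<in> acar Z \<Longrightarrow> \<gamma> Z1 (asmul Z c x) = asmul Z c (\<gamma> Z1 x)"
    using gh unfolding alg_hom_def by simp
  have g0: "\<gamma> Z1 (azero Z) = azero Z" using hom_zero[OF KZ KZ gh] .
  have gid0: "\<And>y. y \<in> acar Z \<Longrightarrow> \<gamma> Z0 y = y" using GA unfolding global_action_def by simp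
  have ginv: "\<And>y. y \<in> acar Z \<Longrightarrow> \<gamma> Z1 (\<gamma> Z1 y) = y"
    using GA unfolding global_action_def by (metis z2_add.simps(3))
  have key: "a = azero X \<and> b = azero X" if ab: "a \<in> acar X" "b \<in> acar X" "\<gamma> Z1 (\<kappa> a) = \<kappa> b" for a b
  proof -
    let ?f = "\<lambda>d. (dinc \<alpha> Z1 d, dmap \<alpha> Z1 d)"
    have "?f ` acar (ddom \<alpha> Z1) = {(a, b). a \<in> acar X \<and> b \<in> acar X \<and> (\<gamma> Z1 \<circ> \<kappa>) a = \<kappa> b}"
      using RZ unfolding is_restriction_def pullback_sq_def bij_betw_def by blast
    moreover have "?f ` acar (ddom \<alpha> Z1) = {(a, b). a \<in> acar X \<and> b \<in> acar X \<and> (swap_act Z1 \<circ> (\<lambda>x. (x, azero X))) a = (b, azero X)}"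
      using R unfolding is_restriction_def pullback_sq_def bij_betw_def by blast
    ultimately have "(a, b) \<in> {(a, b). a \<in> acar X \<and> b \<in> acar X \<and> (swap_act Z1 \<circ> (\<lambda>x. (x, azero X))) a = (b, azero X)}"
      using ab by auto
    then show ?thesis by auto
  qed
  have orth1: "amul Z (\<kappa> a) (\<gamma> Z1 (\<kappa> d)) = azero Z" if "a \<in> acar X" "d \<in> acar X" for a d
  proof -
    have "amul Z (\<kappa> a) (\<gamma> Z1 (\<kappa> d)) \<in> \<kappa> ` acar X" using kid that kin gin unfolding alg_ideal_def by blast
    then obtain a' where a': "a' \<in> acar X" "amul Z (\<kappa> a) (\<gamma> Z1 (\<kappa> d)) = \<kappa> a'" by blast
    have "amul Z (\<gamma> Z1 (\<kappa> a)) (\<kappa> d) \<in> \<kappa> ` acar X" using kid that kin gin unfolding alg_ideal_def by blast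
    then obtain b' where b': "b' \<in> acar X" "amul Z (\<gamma> Z1 (\<kappa> a)) (\<kappa> d) = \<kappa> b'" by blast
    have "\<gamma> Z1 (\<kappa> b') = amul Z (\<gamma> Z1 (\<gamma> Z1 (\<kappa> a))) (\<gamma> Z1 (\<kappa> d))"
      using b'(2)[symmetric] gmul gin kin that by simp
    also have "\<dots> = \<kappa> a'" using a'(2) ginv kin that by simp
    finally have "a' = azero X" using key a' b' by blast
    then show ?thesis using a' k0 by simp
  qed
  have orth2: "amul Z (\<gamma> Z1 (\<kappa> b)) (\<kappa> c) = azero Z" if "b \<in> acar X" "c \<in> acar X" for b c
  proof -
    have "amul Z (\<gamma> Z1 (\<kappa> b)) (\<kappa> c) \<in> \<kappa> ` acar X" using kid that kin gin unfolding alg_ideal_def by blast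
    then obtain a' where a': "a' \<in> acar X" "amul Z (\<gamma> Z1 (\<kappa> b)) (\<kappa> c) = \<kappa> a'" by blast
    have "amul Z (\<kappa> b) (\<gamma> Z1 (\<kappa> c)) \<in> \<kappa> ` acar X" using kid that kin gin unfolding alg_ideal_def by blast
    then obtain b' where b': "b' \<in> acar X" "amul Z (\<kappa> b) (\<gamma> Z1 (\<kappa> c)) = \<kappa> b'" by blast
    have "\<gamma> Z1 (\<kappa> b') = amul Z (\<gamma> Z1 (\<kappa> b)) (\<gamma> Z1 (\<gamma> Z1 (\<kappa> c)))"
      using b'(2)[symmetric] gmul gin kin that by simp
    also have "\<dots> = \<kappa> a'" using a'(2) ginv kin that by simp
    finally have "a' = azero X" using key a' b' by blast
    then show ?thesis using a' k0 by simp
  qed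
  define K' where "K' = (\<lambda>p. aadd Z (\<kappa> (fst p)) (\<gamma> Z1 (\<kappa> (snd p))))"
  have K'in: "\<And>p. p \<in> acar ?P \<Longrightarrow> K' p \<in> acar Z"
    unfolding K'_def by (auto simp: prod_alg_def kadd[OF KZ] kin gin)
  have hom: "alg_hom ?P Z K'"
    unfolding alg_hom_def
  proof (intro conjI ballI allI)
    fix p assume "p \<in> acar ?P" then show "K' p \<in> acar Z" by (rule K'in)
  next
    fix p q assume pq: "p \<in> acar ?P" "q \<in> acar ?P"
    then obtain a b c d where e: "p = (a, b)" "q = (c, d)" "a \<in> acar X" "b \<in> acar X" "c \<in> acar X" "d \<in> acar X"
      by (auto simp: prod_alg_def)
    have "K' (aadd ?P p q) = aadd Z (aadd Z (\<kappa> a) (\<kappa> c)) (aadd Z (\<gamma> Z1 (\<kappa> b)) (\<gamma> Z1 (\<kappa> d)))"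
      unfolding K'_def using e by (simp add: prod_alg_def kadd' gadd kin)
    also have "\<dots> = aadd Z (K' p) (K' q)"
      unfolding K'_def using e kswap4[OF KZ] kin gin by simp
    finally show "K' (aadd ?P p q) = aadd Z (K' p) (K' q)" .
  next
    fix p q assume pq: "p \<in> acar ?P" "q \<in> acar ?P"
    then obtain a b c d where e: "p = (a, b)" "q = (c, d)" "a \<in> acar X" "b \<in> acar X" "c \<in> acar X" "d \<in> acar X"
      by (auto simp: prod_alg_def)
    have "K' (amul ?P p q) = aadd Z (amul Z (\<kappa> a) (\<kappa> c)) (amul Z (\<gamma> Z1 (\<kappa> b)) (\<gamma> Z1 (\<kappa> d)))"
      unfolding K'_def using e by (simp add: prod_alg_def kmul' gmul kin)
    also have "\<dots> = aadd Z (aadd Z (amul Z (\<kappa> a) (\<kappa> c)) (amul Z (\<gamma> Z1 (\<kappa> b)) (\<kappa> c)))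
                           (aadd Z (amul Z (\<kappa> a) (\<gamma> Z1 (\<kappa> d))) (amul Z (\<gamma> Z1 (\<kappa> b)) (\<gamma> Z1 (\<kappa> d))))"
      using e orth1 orth2 krz[OF KZ] klz[OF KZ] kmul[OF KZ] kin gin by simp
    also have "\<dots> = amul Z (K' p) (K' q)"
      unfolding K'_def using e kin gin kldist[OF KZ] krdist[OF KZ] kadd[OF KZ] kmul[OF KZ] by simp
    finally show "K' (amul ?P p q) = amul Z (K' p) (K' q)" .
  next
    fix c p assume "p \<in> acar ?P"
    then obtain a b where e: "p = (a, b)" "a \<in> acar X" "b \<in> acar X"
      by (auto simp: prod_alg_def)
    show "K' (asmul ?P c p) = asmul Z c (K' p)"
      unfolding K'_def using e by (simp add: prod_alg_def ksm' gsm kin gin ksdist[OF KZ])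
  qed
  have ideal: "alg_ideal Z (K' ` acar ?P)"
  proof (rule hom_image_ideal[OF KP KZ hom])
    fix z p assume z: "z \<in> acar Z" and "p \<in> acar ?P"
    then obtain a b where e: "p = (a, b)" "a \<in> acar X" "b \<in> acar X"
      by (auto simp: prod_alg_def)
    have "amul Z z (\<kappa> a) \<in> \<kappa> ` acar X" using kid z e unfolding alg_ideal_def by blast
    then obtain a' where a': "a' \<in> acar X" "amul Z z (\<kappa> a) = \<kappa> a'" by blast
    have "amul Z (\<gamma> Z1 z) (\<kappa> b) \<in> \<kappa> ` acar X" using kid z e gin unfolding alg_ideal_def by blast
    then obtain b' where b': "b' \<in> acar X" "amul Z (\<gamma> Z1 z) (\<kappa> b) = \<kappa> b'" by blast
    have "amul Z z (\<gamma> Z1 (\<kappa> b)) = \<gamma> Z1 (\<kappa> b')"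
      using b'(2)[symmetric] gmul gin kin ginv z e by simp
    then have "amul Z z (K' p) = K' (a', b')"
      unfolding K'_def using e a' z kin gin kldist[OF KZ] by simp
    then show "amul Z z (K' p) \<in> K' ` acar ?P" using a' b' by (auto simp: prod_alg_def)
  next
    fix z p assume z: "z \<in> acar Z" and "p \<in> acar ?P"
    then obtain a b where e: "p = (a, b)" "a \<in> acar X" "b \<in> acar X"
      by (auto simp: prod_alg_def)
    have "amul Z (\<kappa> a) z \<in> \<kappa> ` acar X" using kid z e unfolding alg_ideal_def by blast
    then obtain a' where a': "a' \<in> acar X" "amul Z (\<kappa> a) z = \<kappa> a'" by blast
    have "amul Z (\<kappa> b) (\<gamma> Z1 z) \<in> \<kappa> ` acar X" using kid z e gin unfolding alg_ideal_def by blast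
    then obtain b' where b': "b' \<in> acar X" "amul Z (\<kappa> b) (\<gamma> Z1 z) = \<kappa> b'" by blast
    have "amul Z (\<gamma> Z1 (\<kappa> b)) z = \<gamma> Z1 (\<kappa> b')"
      using b'(2)[symmetric] gmul gin kin ginv z e by simp
    then have "amul Z (K' p) z = K' (a', b')"
      unfolding K'_def using e a' z kin gin krdist[OF KZ] by simp
    then show "amul Z (K' p) z \<in> K' ` acar ?P" using a' b' by (auto simp: prod_alg_def)
  qed
  have gmor: "global_mor ?P swap_act Z \<gamma> K'"
    unfolding global_mor_def morC_def
  proof (intro conjI allI ballI)
    show "kalg ?P" "kalg Z" "alg_hom ?P Z K'" "alg_ideal Z (K' ` acar ?P)" using KP KZ hom ideal by auto
  next
    fix m p assume "p \<in> acar ?P"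
    then obtain a b where e: "p = (a, b)" "a \<in> acar X" "b \<in> acar X"
      by (auto simp: prod_alg_def)
    show "K' (swap_act m p) = \<gamma> m (K' p)"
    proof (cases m)
      case Z0 then show ?thesis using gid0 K'in \<open>p \<in> acar ?P\<close> by simp
    next
      case Z1
      have "\<gamma> m (K' p) = aadd Z (\<gamma> Z1 (\<kappa> a)) (\<kappa> b)"
        unfolding K'_def using Z1 e gadd kin gin ginv by simp
      also have "\<dots> = K' (swap_act m p)" unfolding K'_def using Z1 e kcomm[OF KZ] kin gin by simp
      finally show ?thesis by simp
    qed
  qed
  have ext: "\<forall>x\<in>acar X. K' (x, azero X) = \<kappa> x"
    unfolding K'_def using k0 g0 krz[OF KZ] kin by simp
  have uniq: "\<forall>y\<in>acar ?P. \<kappa>'' y = K' y"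
    if h: "global_mor ?P swap_act Z \<gamma> \<kappa>''" "\<forall>x\<in>acar X. \<kappa>'' (x, azero X) = \<kappa> x" for \<kappa>''
  proof
    fix p assume "p \<in> acar ?P"
    then obtain a b where e: "p = (a, b)" "a \<in> acar X" "b \<in> acar X"
      by (auto simp: prod_alg_def)
    have hh: "alg_hom ?P Z \<kappa>''" using h(1) unfolding global_mor_def morC_def by simp
    have "p = aadd ?P (a, azero X) (azero X, b)" using e by (simp add: prod_alg_def krz[OF K] klz[OF K])
    moreover have "\<kappa>'' (aadd ?P (a, azero X) (azero X, b)) = aadd Z (\<kappa>'' (a, azero X)) (\<kappa>'' (azero X, b))"
      using hh e kz[OF K] unfolding alg_hom_def by (metis (no_types, lifting) SigmaI prod_alg_def kalg.select_convs(1))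
    ultimately have "\<kappa>'' p = aadd Z (\<kappa>'' (a, azero X)) (\<kappa>'' (swap_act Z1 (b, azero X)))"
      by simp
    also have "\<kappa>'' (swap_act Z1 (b, azero X)) = \<gamma> Z1 (\<kappa> b)"
    proof -
      have A: "\<forall>m. \<forall>y\<in>acar ?P. \<kappa>'' (swap_act m y) = \<gamma> m (\<kappa>'' y)"
        using h(1) unfolding global_mor_def by blast
      have B: "(b, azero X) \<in> acar ?P" using e kz[OF K] by (simp add: prod_alg_def)
      have "\<kappa>'' (swap_act Z1 (b, azero X)) = \<gamma> Z1 (\<kappa>'' (b, azero X))"
        using A B by blast
      then show ?thesis using h(2) e by simp
    qed
    finally show "\<kappa>'' p = K' p" unfolding K'_def using h(2) e by simp
  qed
  show ?thesis using gmor ext uniq by blast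
qed


theorem mainTheorem19:
  fixes X :: "('k::field, 'x) kalg"
    and \<alpha> :: "('k, 'd, 'x, z2) datum"
  assumes "kalg X" and "unital X" and "nonzero X"
    and "is_restriction \<alpha> X (prod_alg X) swap_act (\<lambda>x. (x, azero X))"
  shows "universal_globalization TYPE('z) z2_add Z0 \<alpha> X (prod_alg X) swap_act (\<lambda>x. (x, azero X))
    \<and> \<not> is_reflection TYPE('x \<times> 'x) z2_add Z0 \<alpha> X (prod_alg X) swap_act (\<lambda>x. (x, azero X))
    \<and> (\<forall>(Y :: ('k, 'y) kalg) \<beta>' r. \<not> is_reflection TYPE('x \<times> 'x) z2_add Z0 \<alpha> X Y \<beta>' r)"
proof (intro conjI allI)
  have G: "globalization z2_add Z0 \<alpha> X (prod_alg X) swap_act (\<lambda>x. (x, azero X))"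
    unfolding globalization_def using gsw[OF assms(1)] iota_morC[OF assms(1)] assms(4) by simp
  show "universal_globalization TYPE('z) z2_add Z0 \<alpha> X (prod_alg X) swap_act (\<lambda>x. (x, azero X))"
    unfolding universal_globalization_def
  proof (intro conjI allI impI)
    show "globalization z2_add Z0 \<alpha> X (prod_alg X) swap_act (\<lambda>x. (x, azero X))" using G .
  next
    fix Z :: "('k, 'z) kalg" and \<gamma> \<kappa>
    assume "globalization z2_add Z0 \<alpha> X Z \<gamma> \<kappa>"
    then show "\<exists>\<kappa>'. global_mor (prod_alg X) swap_act Z \<gamma> \<kappa>' \<and> (\<forall>x\<in>acar X. \<kappa>' (x, azero X) = \<kappa> x) \<and>
           (\<forall>\<kappa>''. global_mor (prod_alg X) swap_act Z \<gamma> \<kappa>'' \<and> (\<forall>x\<in>acar X. \<kappa>'' (x, azero X) = \<kappa> x) \<longrightarrow>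
                 (\<forall>y\<in>acar (prod_alg X). \<kappa>'' y = \<kappa>' y))"
      using universal_ext[OF assms(1) assms(4)] by blast
  qed
  show "\<not> is_reflection TYPE('x \<times> 'x) z2_add Z0 \<alpha> X (prod_alg X) swap_act (\<lambda>x. (x, azero X))"
    using no_reflection[OF assms] .
  fix Y :: "('k, 'y) kalg" and \<beta>' r
  show "\<not> is_reflection TYPE('x \<times> 'x) z2_add Z0 \<alpha> X Y \<beta>' r"
    using no_reflection[OF assms] .
qed

end
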